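(* Let $X$ take values in a countable set $\mathcal{X}$, $T\in\{0,1\}$, and $Y$ take values in a countable set $\mathcal{Y}\subseteq\mathbb{R}$, with joint distribution $P$, and let $Q(T\mid X)$ be a model with $Q(T=t\mid X=x)>0$ for all $t,x$. Fix $t\in\{0,1\}$ with $P(T=t)>0$ and $y\in\mathcal{Y}$ with $Z_{y,t}:=\sum_{x}P(Y=y\mid X=x,T=t)P(X=x)\in(0,\infty)$. For a model $M\in\{P,Q\}$ define $$\pi_{y,t}(M)=\sum_{x\in\mathcal{X}}P(Y=y\mid X=x,T=t)\,\frac{P(X=x\mid T=t)}{M(T=t\mid X=x)}.$$ Let $R_{y,t}$ be the distribution on $\mathcal{X}$ with $R_{y,t}(x)=P(Y=y\mid X=x,T=t)P(X=x)/Z_{y,t}$, let $\ell_t(x)=\left(1-\frac{P(T=t\mid X=x)}{Q(T=t\mid X=x)}\right)^2$, and let $k'_{y,t}=Z_{y,t}/P(T=t)$. Then $$|\pi_{y,t}(P)-\pi_{y,t}(Q)|\le k'_{y,t}\,\mathbb{E}_{X\sim R_{y,t}}\big[\ell_t(X)^{1/2}\big].$$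
   Context: Here $P(Y=y\mid X=x,T=t)$, $P(X=x\mid T=t)$, $P(T=t\mid X=x)$ denote conditional probabilities under the data distribution $P$, and $Q(T=t\mid X=x)$ is a propensity score model used in an inverse probability of treatment weighting estimator. *)

theory Defs
  imports "HOL-Probability.Probability"
begin

text \<open>The joint distribution P of (X, T, Y) is a pmf on triples (x, t, y),
  with X in a countable type, T a natural number (supported on 0,1), Y real.\<close>

definition pX :: "('x \<times> nat \<times> real) pmf \<Rightarrow> 'x \<Rightarrow> real" where
  "pX P x = measure_pmf.prob P {w. fst w = x}"

definition pT :: "('x \<times> nat \<times> real) pmf \<Rightarrow> nat \<Rightarrow> real" where
  "pT P t = measure_pmf.prob P {w. fst (snd w) = t}"

definition pXT :: "('x \<times> nat \<times> real) pmf \<Rightarrow> 'x \<Rightarrow> nat \<Rightarrow> real" where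
  "pXT P x t = measure_pmf.prob P {w. fst w = x \<and> fst (snd w) = t}"

definition pXTY :: "('x \<times> nat \<times> real) pmf \<Rightarrow> 'x \<Rightarrow> nat \<Rightarrow> real \<Rightarrow> real" where
  "pXTY P x t y = measure_pmf.prob P {w. fst w = x \<and> fst (snd w) = t \<and> snd (snd w) = y}"

definition condY :: "('x \<times> nat \<times> real) pmf \<Rightarrow> real \<Rightarrow> 'x \<Rightarrow> nat \<Rightarrow> real" where
  "condY P y x t = pXTY P x t y / pXT P x t"

definition condX :: "('x \<times> nat \<times> real) pmf \<Rightarrow> 'x \<Rightarrow> nat \<Rightarrow> real" where
  "condX P x t = pXT P x t / pT P t"

definition condT :: "('x \<times> nat \<times> real) pmf \<Rightarrow> nat \<Rightarrow> 'x \<Rightarrow> real" where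
  "condT P t x = pXT P x t / pX P x"

definition Zyt :: "('x \<times> nat \<times> real) pmf \<Rightarrow> real \<Rightarrow> nat \<Rightarrow> real" where
  "Zyt P y t = (\<Sum>\<^sub>\<infinity>x. condY P y x t * pX P x)"

text \<open>pi_{y,t}(M), where M x s is the propensity M(T=s | X=x).\<close>
definition pi_yt :: "('x \<times> nat \<times> real) pmf \<Rightarrow> real \<Rightarrow> nat \<Rightarrow> ('x \<Rightarrow> nat \<Rightarrow> real) \<Rightarrow> real" where
  "pi_yt P y t M = (\<Sum>\<^sub>\<infinity>x. condY P y x t * condX P x t / M x t)"

definition R_yt :: "('x \<times> nat \<times> real) pmf \<Rightarrow> real \<Rightarrow> nat \<Rightarrow> 'x pmf" where
  "R_yt P y t = embed_pmf (\<lambda>x. condY P y x t * pX P x / Zyt P y t)"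

definition ell :: "('x \<times> nat \<times> real) pmf \<Rightarrow> ('x \<Rightarrow> nat pmf) \<Rightarrow> nat \<Rightarrow> 'x \<Rightarrow> real" where
  "ell P Q t x = (1 - condT P t x / pmf (Q x) t) ^ 2"

end

theory Submission imports Defs begin

lemma nn_count_infsum:
  fixes f :: "'a::countable \<Rightarrow> real"
  assumes nn: "\<And>x. f x \<ge> 0"
  shows "(\<integral>\<^sup>+ x. ennreal (f x) \<partial>count_space UNIV) = (if f summable_on UNIV then ennreal (infsum f UNIV) else \<top>)"
proof (cases "f summable_on UNIV")
  case True
  then have "Infinite_Sum.abs_summable_on f UNIV"
    using summable_on_iff_abs_summable_on_real by blast
  then have a: "Infinite_Set_Sum.abs_summable_on f UNIV" using abs_summable_equivalent by blast
  show ?thesis using True nn_integral_conv_infsetsum[OF a] infsetsum_infsum[OF a] nn by simp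
next
  case False
  have "(\<integral>\<^sup>+ x. ennreal (f x) \<partial>count_space UNIV) = \<top>"
  proof (rule ccontr)
    assume "(\<integral>\<^sup>+ x. ennreal (f x) \<partial>count_space UNIV) \<noteq> \<top>"
    then have "integrable (count_space UNIV) f"
      using nn by (intro integrableI_nonneg) (auto simp: less_top)
    then have "Infinite_Set_Sum.abs_summable_on f UNIV" by (simp add: abs_summable_on_def)
    then have "f summable_on UNIV"
      using abs_summable_equivalent summable_on_iff_abs_summable_on_real by blast
    with False show False by simp
  qed
  with False show ?thesis by simp
qed

theorem mainTheorem2:
  fixes P :: "('x::countable \<times> nat \<times> real) pmf"
    and Q :: "'x \<Rightarrow> nat pmf"
    and t :: nat and y :: real
  assumes T_binary: "\<forall>w\<in>set_pmf P. fst (snd w) \<in> {0, 1}"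
    and Q_binary: "\<forall>x. set_pmf (Q x) \<subseteq> {0, 1}"
    and Q_pos: "\<forall>x. \<forall>s\<in>{0, 1}. pmf (Q x) s > 0"
    and t01: "t \<in> {0, 1}"
    and pT_pos: "pT P t > 0"
    and Z_pos: "Zyt P y t > 0"
  shows "ennreal \<bar>pi_yt P y t (\<lambda>x s. condT P s x) - pi_yt P y t (\<lambda>x s. pmf (Q x) s)\<bar>
           \<le> ennreal (Zyt P y t / pT P t) *
             (\<integral>\<^sup>+ x. ennreal (sqrt (ell P Q t x)) \<partial>measure_pmf (R_yt P y t))"
proof -
  define k where "k = pT P t"
  define Z where "Z = Zyt P y t"
  define f where "f x = condY P y x t * pX P x" for x
  define c where "c x = condT P t x" for x
  define q where "q x = pmf (Q x) t" for x
  define h where "h x = f x * c x / q x" for x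
  have k: "k > 0" using pT_pos k_def by simp
  have Z: "Z > 0" using Z_pos Z_def by simp
  have q: "q x > 0" for x using Q_pos t01 q_def by auto
  have pXT_le: "pXT P x t \<le> pX P x" for x
    unfolding pXT_def pX_def by (rule measure_pmf.finite_measure_mono) auto
  have pXT_nn: "pXT P x t \<ge> 0" for x unfolding pXT_def by simp
  have pXTY_nn: "pXTY P x t y \<ge> 0" for x unfolding pXTY_def by simp
  have f_nn: "f x \<ge> 0" for x
    using pXT_nn[of x] pXT_le[of x] pXTY_nn[of x] unfolding f_def condY_def by simp
  have c_nn: "c x \<ge> 0" for x
    using pXT_nn[of x] pXT_le[of x] unfolding c_def condT_def by simp
  have h_nn: "h x \<ge> 0" for x using f_nn c_nn q unfolding h_def
    by (simp add: less_imp_le)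
  have ZE: "Z = infsum f UNIV" unfolding Z_def Zyt_def f_def by simp
  have f_sum: "f summable_on UNIV"
    using ZE Z infsum_not_exists by fastforce
  have piP: "pi_yt P y t (\<lambda>x s. condT P s x) = infsum (\<lambda>x. f x / k) UNIV"
    unfolding pi_yt_def
  proof (rule infsum_cong)
    fix x
    show "condY P y x t * condX P x t / condT P t x = f x / k"
    proof (cases "pXT P x t = 0")
      case True then show ?thesis by (simp add: f_def condY_def condX_def)
    next
      case False
      then have "pX P x \<noteq> 0" using pXT_le[of x] pXT_nn[of x] by linarith
      with False k show ?thesis by (simp add: f_def condY_def condX_def condT_def k_def)
    qed
  qed
  have piQ: "pi_yt P y t (\<lambda>x s. pmf (Q x) s) = infsum (\<lambda>x. h x / k) UNIV"
    unfolding pi_yt_def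
  proof (rule infsum_cong)
    fix x
    show "condY P y x t * condX P x t / pmf (Q x) t = h x / k"
    proof (cases "pX P x = 0")
      case True
      then have "pXT P x t = 0" using pXT_le[of x] pXT_nn[of x] by linarith
      with True show ?thesis by (simp add: h_def f_def condY_def condX_def)
    next
      case False
      with k show ?thesis by (simp add: h_def f_def c_def q_def condY_def condX_def condT_def k_def)
    qed
  qed
  have sq: "sqrt (ell P Q t x) = \<bar>1 - c x / q x\<bar>" for x
    unfolding ell_def c_def q_def by simp
  have fsZ: "(\<lambda>x. f x / Z) summable_on UNIV"
    using summable_on_cmult_left[OF f_sum, of "inverse Z"] by (simp add: divide_inverse)
  have fZ1: "infsum (\<lambda>x. f x / Z) UNIV = 1"
    using infsum_cmult_left'[of f "inverse Z" UNIV] Z ZE by (simp add: divide_inverse)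
  have pmfR: "pmf (R_yt P y t) x = f x / Z" for x
  proof -
    have "(\<integral>\<^sup>+ x. ennreal (f x / Z) \<partial>count_space UNIV) = 1"
      using nn_count_infsum[of "\<lambda>x. f x / Z"] f_nn Z fsZ fZ1 by simp
    then show ?thesis unfolding R_yt_def
      using pmf_embed_pmf[of "\<lambda>x. f x / Z"] f_nn Z
      by (simp add: f_def Z_def)
  qed
  define d where "d x = \<bar>f x - h x\<bar> / k" for x
  have d_nn: "d x \<ge> 0" for x using k by (simp add: d_def)
  have RHS: "ennreal (Z / k) * (\<integral>\<^sup>+ x. ennreal (sqrt (ell P Q t x)) \<partial>measure_pmf (R_yt P y t))
      = (\<integral>\<^sup>+ x. ennreal (d x) \<partial>count_space UNIV)"
  proof -
    have "(\<integral>\<^sup>+ x. ennreal (sqrt (ell P Q t x)) \<partial>measure_pmf (R_yt P y t))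
        = (\<integral>\<^sup>+ x. ennreal (f x / Z * \<bar>1 - c x / q x\<bar>) \<partial>count_space UNIV)"
      unfolding nn_integral_measure_pmf pmfR sq
      using f_nn Z by (simp add: ennreal_mult[symmetric])
    also have "ennreal (Z / k) * \<dots> = (\<integral>\<^sup>+ x. ennreal (Z / k) * ennreal (f x / Z * \<bar>1 - c x / q x\<bar>) \<partial>count_space UNIV)"
      by (rule nn_integral_cmult[symmetric]) simp
    also have "\<dots> = (\<integral>\<^sup>+ x. ennreal (d x) \<partial>count_space UNIV)"
    proof (rule nn_integral_cong)
      fix x
      have "Z / k * (f x / Z * \<bar>1 - c x / q x\<bar>) = \<bar>f x * (1 - c x / q x)\<bar> / k"
        using Z f_nn[of x] by (simp add: abs_mult)
      also have "f x * (1 - c x / q x) = f x - h x" unfolding h_def by (simp add: algebra_simps)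
      finally have "Z / k * (f x / Z * \<bar>1 - c x / q x\<bar>) = d x" unfolding d_def .
      then show "ennreal (Z / k) * ennreal (f x / Z * \<bar>1 - c x / q x\<bar>) = ennreal (d x)"
        using Z k f_nn[of x] by (simp add: ennreal_mult[symmetric])
    qed
    finally show ?thesis .
  qed
  show ?thesis
    unfolding Z_def[symmetric] k_def[symmetric] RHS piP piQ
  proof (cases "h summable_on UNIV")
    case True
    have hn: "(\<lambda>x. - h x) summable_on UNIV"
      using summable_on_cmult_right[OF True, of "-1"] by simp
    have g_sum: "(\<lambda>x. (f x - h x) / k) summable_on UNIV"
      using summable_on_cmult_left[OF summable_on_add[OF f_sum hn], of "inverse k"]
      by (simp add: divide_inverse)
    have eq: "infsum (\<lambda>x. f x / k) UNIV - infsum (\<lambda>x. h x / k) UNIV = infsum (\<lambda>x. (f x - h x) / k) UNIV"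
    proof -
      have A: "infsum (\<lambda>x. f x / k) UNIV = infsum f UNIV / k"
        using infsum_cmult_left'[of f "inverse k" UNIV] by (simp add: divide_inverse)
      have B: "infsum (\<lambda>x. h x / k) UNIV = infsum h UNIV / k"
        using infsum_cmult_left'[of h "inverse k" UNIV] by (simp add: divide_inverse)
      have C: "infsum (\<lambda>x. (f x - h x) / k) UNIV = infsum (\<lambda>x. f x - h x) UNIV / k"
        using infsum_cmult_left'[of "\<lambda>x. f x - h x" "inverse k" UNIV] by (simp add: divide_inverse)
      have D: "infsum (\<lambda>x. f x + - h x) UNIV = infsum f UNIV + infsum (\<lambda>x. - h x) UNIV"
        by (rule infsum_add[OF f_sum hn])
      have E: "infsum (\<lambda>x. - h x) UNIV = - infsum h UNIV"
        using infsum_cmult_right'[of "-1" h UNIV] by simp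
      have F: "infsum (\<lambda>x. f x - h x) UNIV = infsum f UNIV - infsum h UNIV"
      proof -
        have "infsum (\<lambda>x. f x - h x) UNIV = infsum (\<lambda>x. f x + - h x) UNIV"
          by (rule infsum_cong) (rule diff_conv_add_uminus)
        also have "\<dots> = infsum f UNIV + - infsum h UNIV" unfolding D E ..
        also have "\<dots> = infsum f UNIV - infsum h UNIV" by (rule diff_conv_add_uminus[symmetric])
        finally show ?thesis .
      qed
      show ?thesis unfolding A B C F by (rule diff_divide_distrib[symmetric])
    qed
    have dfun: "(\<lambda>x. \<bar>(f x - h x) / k\<bar>) = d"
    proof
      fix x have "\<bar>k\<bar> = k" using k by (rule abs_of_pos)
      then show "\<bar>(f x - h x) / k\<bar> = d x"
        unfolding d_def abs_divide by (rule arg_cong)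
    qed
    have ga: "Infinite_Sum.abs_summable_on (\<lambda>x. (f x - h x) / k) UNIV"
      by (rule summable_on_iff_abs_summable_on_real[THEN iffD1, OF g_sum])
    have le: "\<bar>infsum (\<lambda>x. (f x - h x) / k) UNIV\<bar> \<le> infsum d UNIV"
      using norm_infsum_bound[OF ga] unfolding real_norm_def dfun .
    have d_sum: "d summable_on UNIV"
      using ga unfolding real_norm_def dfun .
    show "ennreal \<bar>infsum (\<lambda>x. f x / k) UNIV - infsum (\<lambda>x. h x / k) UNIV\<bar>
        \<le> (\<integral>\<^sup>+ x. ennreal (d x) \<partial>count_space UNIV)"
    proof -
      have "ennreal \<bar>infsum (\<lambda>x. (f x - h x) / k) UNIV\<bar> \<le> ennreal (infsum d UNIV)"
        by (rule ennreal_leI[OF le])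
      then show ?thesis unfolding nn_count_infsum[of d, OF d_nn] eq if_P[OF d_sum] .
    qed
  next
    case False
    have "\<not> d summable_on UNIV"
    proof
      assume ds: "d summable_on UNIV"
      have "(\<lambda>x. f x + k * d x) summable_on UNIV"
        using summable_on_add[OF f_sum summable_on_cmult_right[OF ds, of k]] .
      then have "h summable_on UNIV"
      proof (rule summable_on_comparison_test)
        fix x
        have "k * d x = \<bar>f x - h x\<bar>" unfolding d_def using k by simp
        then show "h x \<le> f x + k * d x" using f_nn[of x] by linarith
        show "0 \<le> h x" by (rule h_nn)
      qed
      with False show False by blast
    qed
    then show "ennreal \<bar>infsum (\<lambda>x. f x / k) UNIV - infsum (\<lambda>x. h x / k) UNIV\<bar>
        \<le> (\<integral>\<^sup>+ x. ennreal (d x) \<partial>count_space UNIV)"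
      unfolding nn_count_infsum[of d, OF d_nn] if_not_P[OF \<open>\<not> d summable_on UNIV\<close>] by (simp only: top_greatest)
  qed
qed

end
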